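(* Let $\mathcal{L}$ be an intuitionistic abstract logic and $a,b\in Expr_{\mathcal{L}}$. For every theory $T\in Th_{\mathcal{L}}$: (a) $a,b\in T$ iff $a\wedge b\in T$; (b) if $a\in T$ or $b\in T$ then $a\vee b\in T$, and the converse holds when $T$ is prime; (c) if $a\in T$ and $a\to b\in T$ then $b\in T$; (d) if $P\in PTh_{\mathcal{L}}$ is a prime theory, then $a\to b\in P$ iff for every prime theory $Q\supseteq P$, $a\in Q$ implies $b\in Q$.
   Context: An abstract logic is a triple $\mathcal{L}=(Expr_{\mathcal{L}},Th_{\mathcal{L}},\mathcal{C}_{\mathcal{L}})$ where $Expr_{\mathcal{L}}$ is a set, $Th_{\mathcal{L}}$ a non-empty set of subsets of $Expr_{\mathcal{L}}$ (theories) with $\bigcap\mathcal{T}\in Th_{\mathcal{L}}$ for every non-empty $\mathcal{T}\subseteq Th_{\mathcal{L}}$, and $\mathcal{C}_{\mathcal{L}}$ a set of operations on $Expr_{\mathcal{L}}$. $\mathcal{L}$ is closed under union of chains if the union of every non-empty chain of theories is a theory. A theory $T$ is prime if $T=\bigcap\mathcal{T}$ for a non-empty finite $\mathcal{T}\subseteq Th_{\mathcal{L}}$ implies $T\in\mathcal{T}$; totally prime if this holds for every non-empty $\mathcal{T}$ of any cardinality. $PTh_{\mathcal{L}}$, $TPTh_{\mathcal{L}}$ denote the sets of prime and totally prime theories. An intuitionistic abstract logic is an abstract logic closed under union of chains with binary connectives $\vee,\wedge,\to$ and constants $\top,\bot$ such that for all $a,b\in Expr_{\mathcal{L}}$ and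 all $T\in TPTh_{\mathcal{L}}$: $a\vee b\in T$ iff $a\in T$ or $b\in T$; $a\wedge b\in T$ iff $a\in T$ and $b\in T$; $a\to b\in T$ iff for every totally prime $T'\supseteq T$, $a\in T'$ implies $b\in T'$; $\top$ lies in every theory and $\bot$ in no theory. *)

theory Defs
  imports Main
begin

text \<open>An abstract logic given by its set of expressions E and its set of theories Th.
  The set of operations C is represented only through the connectives that are used.\<close>

definition abstract_logic :: "'a set \<Rightarrow> 'a set set \<Rightarrow> bool" where
  "abstract_logic E Th \<longleftrightarrow>
     Th \<noteq> {} \<and> (\<forall>T\<in>Th. T \<subseteq> E) \<and>
     (\<forall>\<T>. \<T> \<subseteq> Th \<and> \<T> \<noteq> {} \<longrightarrow> \<Inter>\<T> \<in> Th)"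

definition closed_under_union_of_chains :: "'a set set \<Rightarrow> bool" where
  "closed_under_union_of_chains Th \<longleftrightarrow>
     (\<forall>\<C>. \<C> \<subseteq> Th \<and> \<C> \<noteq> {} \<and> (\<forall>X\<in>\<C>. \<forall>Y\<in>\<C>. X \<subseteq> Y \<or> Y \<subseteq> X)
        \<longrightarrow> \<Union>\<C> \<in> Th)"

definition PTh :: "'a set set \<Rightarrow> 'a set set" where
  "PTh Th = {T \<in> Th. \<forall>\<T>. \<T> \<subseteq> Th \<and> \<T> \<noteq> {} \<and> finite \<T> \<and> T = \<Inter>\<T> \<longrightarrow> T \<in> \<T>}"

definition TPTh :: "'a set set \<Rightarrow> 'a set set" where
  "TPTh Th = {T \<in> Th. \<forall>\<T>. \<T> \<subseteq> Th \<and> \<T> \<noteq> {} \<and> T = \<Inter>\<T> \<longrightarrow> T \<in> \<T>}"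

definition intuitionistic_abstract_logic ::
  "'a set \<Rightarrow> 'a set set \<Rightarrow> ('a \<Rightarrow> 'a \<Rightarrow> 'a) \<Rightarrow> ('a \<Rightarrow> 'a \<Rightarrow> 'a) \<Rightarrow> ('a \<Rightarrow> 'a \<Rightarrow> 'a)
     \<Rightarrow> 'a \<Rightarrow> 'a \<Rightarrow> bool" where
  "intuitionistic_abstract_logic E Th dsj cnj imp tp bt \<longleftrightarrow>
     abstract_logic E Th \<and> closed_under_union_of_chains Th \<and>
     (\<forall>a\<in>E. \<forall>b\<in>E. dsj a b \<in> E \<and> cnj a b \<in> E \<and> imp a b \<in> E) \<and>
     tp \<in> E \<and> bt \<in> E \<and>
     (\<forall>a\<in>E. \<forall>b\<in>E. \<forall>T\<in>TPTh Th.
        (dsj a b \<in> T \<longleftrightarrow> a \<in> T \<or> b \<in> T) \<and>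
        (cnj a b \<in> T \<longleftrightarrow> a \<in> T \<and> b \<in> T) \<and>
        (imp a b \<in> T \<longleftrightarrow> (\<forall>T'\<in>TPTh Th. T \<subseteq> T' \<longrightarrow> a \<in> T' \<longrightarrow> b \<in> T'))) \<and>
     (\<forall>T\<in>Th. tp \<in> T \<and> bt \<notin> T)"

end

theory Submission
  imports Defs
begin

lemma sep:
  assumes cl: "closed_under_union_of_chains Th" and T: "T \<in> Th" and x: "x \<notin> T"
  shows "\<exists>M\<in>TPTh Th. T \<subseteq> M \<and> x \<notin> M"
proof -
  let ?A = "{S \<in> Th. T \<subseteq> S \<and> x \<notin> S}"
  have "\<forall>C\<in>chains ?A. \<exists>U\<in>?A. \<forall>X\<in>C. X \<subseteq> U"
  proof
    fix C assume C: "C \<in> chains ?A"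
    show "\<exists>U\<in>?A. \<forall>X\<in>C. X \<subseteq> U"
    proof (cases "C = {}")
      case True then show ?thesis using T x by auto
    next
      case False
      have sub: "C \<subseteq> ?A" using C by (simp add: chains_def)
      have ch: "\<forall>X\<in>C. \<forall>Y\<in>C. X \<subseteq> Y \<or> Y \<subseteq> X"
        using C unfolding chains_def chain_subset_def by blast
      have "\<Union>C \<in> Th" using cl sub ch False
        unfolding closed_under_union_of_chains_def by blast
      moreover have "T \<subseteq> \<Union>C" "x \<notin> \<Union>C" using sub False by blast+
      ultimately show ?thesis by blast
    qed
  qed
  then obtain M where M: "M \<in> ?A" and mx: "\<forall>X\<in>?A. M \<subseteq> X \<longrightarrow> X = M"
    by (rule Zorn_Lemma2[THEN bexE]) blast
  have "M \<in> TPTh Th"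
    unfolding TPTh_def
  proof (intro CollectI conjI allI impI)
    show "M \<in> Th" using M by simp
  next
    fix \<T> assume "\<T> \<subseteq> Th \<and> \<T> \<noteq> {} \<and> M = \<Inter>\<T>"
    then have s: "\<T> \<subseteq> Th" and eq: "M = \<Inter>\<T>" by auto
    show "M \<in> \<T>" unfolding eq
    proof (rule ccontr)
      assume nin: "\<Inter>\<T> \<notin> \<T>"
      have "x \<in> Y" if Y: "Y \<in> \<T>" for Y
      proof (rule ccontr)
        assume "x \<notin> Y"
        moreover have "M \<subseteq> Y" using eq Y by blast
        ultimately have "Y = M" using mx Y s M by blast
        then show False using nin eq Y by simp
      qed
      then have "x \<in> M" using eq by blast
      then show False using M by simp
    qed
  qed
  then show ?thesis using M by blast
qed

lemma memb:
  assumes cl: "closed_under_union_of_chains Th" and T: "T \<in> Th"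
  shows "x \<in> T \<longleftrightarrow> (\<forall>M\<in>TPTh Th. T \<subseteq> M \<longrightarrow> x \<in> M)"
  using sep[OF cl T, of x] by blast

theorem lemma2p7:
  assumes "intuitionistic_abstract_logic E Th dsj cnj imp tp bt"
    and "a \<in> E" and "b \<in> E"
  shows "(\<forall>T\<in>Th.
      ((a \<in> T \<and> b \<in> T) \<longleftrightarrow> cnj a b \<in> T) \<and>
      ((a \<in> T \<or> b \<in> T) \<longrightarrow> dsj a b \<in> T) \<and>
      (T \<in> PTh Th \<longrightarrow> dsj a b \<in> T \<longrightarrow> a \<in> T \<or> b \<in> T) \<and>
      ((a \<in> T \<and> imp a b \<in> T) \<longrightarrow> b \<in> T)) \<and>
    (\<forall>P\<in>PTh Th. imp a b \<in> P \<longleftrightarrow> (\<forall>Q\<in>PTh Th. P \<subseteq> Q \<longrightarrow> a \<in> Q \<longrightarrow> b \<in> Q))"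
proof -
  have cl: "closed_under_union_of_chains Th"
    and al: "abstract_logic E Th"
    and D: "\<And>T. T \<in> TPTh Th \<Longrightarrow> (dsj a b \<in> T \<longleftrightarrow> a \<in> T \<or> b \<in> T)"
    and C: "\<And>T. T \<in> TPTh Th \<Longrightarrow> (cnj a b \<in> T \<longleftrightarrow> a \<in> T \<and> b \<in> T)"
    and I: "\<And>T. T \<in> TPTh Th \<Longrightarrow> (imp a b \<in> T \<longleftrightarrow> (\<forall>T'\<in>TPTh Th. T \<subseteq> T' \<longrightarrow> a \<in> T' \<longrightarrow> b \<in> T'))"
    using assms unfolding intuitionistic_abstract_logic_def by blast+
  have inter: "\<And>\<T>. \<T> \<subseteq> Th \<Longrightarrow> \<T> \<noteq> {} \<Longrightarrow> \<Inter>\<T> \<in> Th"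
    using al unfolding abstract_logic_def by blast
  have TP_sub: "TPTh Th \<subseteq> PTh Th" unfolding TPTh_def PTh_def by blast
  have TP_Th: "TPTh Th \<subseteq> Th" unfolding TPTh_def by blast
  have part1: "((a \<in> T \<and> b \<in> T) \<longleftrightarrow> cnj a b \<in> T) \<and>
      ((a \<in> T \<or> b \<in> T) \<longrightarrow> dsj a b \<in> T) \<and>
      (T \<in> PTh Th \<longrightarrow> dsj a b \<in> T \<longrightarrow> a \<in> T \<or> b \<in> T) \<and>
      ((a \<in> T \<and> imp a b \<in> T) \<longrightarrow> b \<in> T)" if T: "T \<in> Th" for T
  proof (intro conjI impI)
    note m = memb[OF cl T]
    show "(a \<in> T \<and> b \<in> T) \<longleftrightarrow> cnj a b \<in> T"
      using m[of a] m[of b] m[of "cnj a b"] C by blast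
    show "a \<in> T \<or> b \<in> T \<Longrightarrow> dsj a b \<in> T"
      using m[of a] m[of b] m[of "dsj a b"] D by blast
    show "a \<in> T \<and> imp a b \<in> T \<Longrightarrow> b \<in> T"
      using m[of a] m[of b] m[of "imp a b"] I by blast
    assume P: "T \<in> PTh Th" and d: "dsj a b \<in> T"
    have all: "\<forall>M\<in>TPTh Th. T \<subseteq> M \<longrightarrow> a \<in> M \<or> b \<in> M"
      using m[of "dsj a b"] d D by blast
    show "a \<in> T \<or> b \<in> T"
    proof (rule ccontr)
      assume nab: "\<not> (a \<in> T \<or> b \<in> T)"
      let ?Xa = "{M\<in>TPTh Th. T \<subseteq> M \<and> a \<in> M}"
      let ?Xb = "{M\<in>TPTh Th. T \<subseteq> M \<and> b \<in> M}"
      have nea: "?Xa \<noteq> {}"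
      proof
        assume "?Xa = {}"
        then have "\<forall>M\<in>TPTh Th. T \<subseteq> M \<longrightarrow> b \<in> M" using all by blast
        then show False using m[of b] nab by blast
      qed
      have neb: "?Xb \<noteq> {}"
      proof
        assume "?Xb = {}"
        then have "\<forall>M\<in>TPTh Th. T \<subseteq> M \<longrightarrow> a \<in> M" using all by blast
        then show False using m[of a] nab by blast
      qed
      have ta: "\<Inter>?Xa \<in> Th" using inter[OF _ nea] TP_Th by blast
      have tb: "\<Inter>?Xb \<in> Th" using inter[OF _ neb] TP_Th by blast
      have eq: "T = \<Inter>{\<Inter>?Xa, \<Inter>?Xb}"
      proof
        show "T \<subseteq> \<Inter>{\<Inter>?Xa, \<Inter>?Xb}" by blast
        show "\<Inter>{\<Inter>?Xa, \<Inter>?Xb} \<subseteq> T"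
        proof
          fix y assume y: "y \<in> \<Inter>{\<Inter>?Xa, \<Inter>?Xb}"
          have "\<forall>M\<in>TPTh Th. T \<subseteq> M \<longrightarrow> y \<in> M"
          proof (intro ballI impI)
            fix M assume "M \<in> TPTh Th" "T \<subseteq> M"
            then show "y \<in> M" using all y by blast
          qed
          then show "y \<in> T" using m[of y] by blast
        qed
      qed
      have "T \<in> {\<Inter>?Xa, \<Inter>?Xb}"
        proof -
        have "\<forall>\<T>. \<T> \<subseteq> Th \<and> \<T> \<noteq> {} \<and> finite \<T> \<and> T = \<Inter>\<T> \<longrightarrow> T \<in> \<T>"
          using P unfolding PTh_def by blast
        then have "{\<Inter>?Xa, \<Inter>?Xb} \<subseteq> Th \<and> {\<Inter>?Xa, \<Inter>?Xb} \<noteq> {} \<and> finite {\<Inter>?Xa, \<Inter>?Xb} \<and> T = \<Inter>{\<Inter>?Xa, \<Inter>?Xb} \<longrightarrow> T \<in> {\<Inter>?Xa, \<Inter>?Xb}"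
          by (rule spec)
        then show ?thesis using ta tb eq by simp
      qed
      moreover have "a \<in> \<Inter>?Xa" "b \<in> \<Inter>?Xb" by blast+
      ultimately show False using nab by blast
    qed
  qed
  have part2: "imp a b \<in> P \<longleftrightarrow> (\<forall>Q\<in>PTh Th. P \<subseteq> Q \<longrightarrow> a \<in> Q \<longrightarrow> b \<in> Q)"
    if P: "P \<in> PTh Th" for P
  proof
    assume i: "imp a b \<in> P"
    show "\<forall>Q\<in>PTh Th. P \<subseteq> Q \<longrightarrow> a \<in> Q \<longrightarrow> b \<in> Q"
    proof (intro ballI impI)
      fix Q assume Q: "Q \<in> PTh Th" "P \<subseteq> Q" "a \<in> Q"
      have "Q \<in> Th" using Q unfolding PTh_def by blast
      then show "b \<in> Q" using part1[of Q] Q i by blast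
    qed
  next
    assume h: "\<forall>Q\<in>PTh Th. P \<subseteq> Q \<longrightarrow> a \<in> Q \<longrightarrow> b \<in> Q"
    have PT: "P \<in> Th" using P unfolding PTh_def by blast
    show "imp a b \<in> P"
    proof (rule ccontr)
      assume "imp a b \<notin> P"
      then obtain M where M: "M \<in> TPTh Th" "P \<subseteq> M" "imp a b \<notin> M"
        using sep[OF cl PT] by blast
      then obtain M' where "M' \<in> TPTh Th" "M \<subseteq> M'" "a \<in> M'" "b \<notin> M'"
        using I by blast
      then show False using h TP_sub M by blast
    qed
  qed
  show ?thesis using part1 part2 by blast
qed

end
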